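(* Let $\Bbbk$ be an algebraically closed field of characteristic zero and $H$ the $\Bbbk$-algebra generated by $b,c,z$ with relations $b^2=c^2=1$, $bc=cb$, $zb=-bz$, $zc=-cz$, $z^2=0$. Let $e_0=\frac14(1+b)(1+c)$, $e_1=\frac14(1+b)(1-c)$, $e_2=\frac14(1-b)(1+c)$, $e_3=\frac14(1-b)(1-c)$, and let $\tau$ be the permutation of $\{0,1,2,3\}$ with $\tau(0)=3,\tau(1)=2,\tau(2)=1,\tau(3)=0$. Then for $i\in\{0,1,2,3\}$ and $k\in\{0,1,2,3\}\setminus\{i,\tau(i)\}$, the ideals $(e_i+e_{\tau(i)})$, $(z+e_i+e_{\tau(i)})$, $(ze_k+e_i+e_{\tau(i)})$ and $(ze_{\tau(k)}+e_i+e_{\tau(i)})$ are pairwise distinct.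
   Context: $(a)$ denotes the two-sided ideal of $H$ generated by $a$. *)

theory Defs
  imports "HOL-Algebra.Ideal" "HOL-Computational_Algebra.Polynomial"
begin

text \<open>Concrete model of H: an element is its coefficient function on the
monomial basis b^p c^q z^r (p,q,r \<in> {0,1}), encoded by (p,q,r) :: bool*bool*bool.\<close>

type_synonym 'k halg = "bool \<times> bool \<times> bool \<Rightarrow> 'k"

text \<open>Product of basis monomials: b^p1 c^q1 z^r1 * b^p2 c^q2 z^r2.
z^2 = 0; moving z past b^p2 c^q2 gives sign (-1)^(p2+q2); b, c commute, b^2=c^2=1.\<close>
definition mmul :: "bool \<times> bool \<times> bool \<Rightarrow> bool \<times> bool \<times> bool \<Rightarrow> ('k::field \<times> (bool \<times> bool \<times> bool)) option" where
  "mmul m1 m2 = (case m1 of (p1, q1, r1) \<Rightarrow> case m2 of (p2, q2, r2) \<Rightarrow>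
     if r1 \<and> r2 then None
     else Some (if r1 \<and> p2 \<noteq> q2 then -1 else 1, (p1 \<noteq> p2, q1 \<noteq> q2, r1 \<or> r2)))"

definition hmul :: "'k::field halg \<Rightarrow> 'k halg \<Rightarrow> 'k halg" where
  "hmul x y = (\<lambda>m. \<Sum>m1\<in>UNIV. \<Sum>m2\<in>UNIV.
      (case mmul m1 m2 of None \<Rightarrow> 0
        | Some (s, m') \<Rightarrow> if m' = m then s * x m1 * y m2 else 0))"

definition hadd :: "'k::field halg \<Rightarrow> 'k halg \<Rightarrow> 'k halg" where
  "hadd x y = (\<lambda>m. x m + y m)"

definition hsub :: "'k::field halg \<Rightarrow> 'k halg \<Rightarrow> 'k halg" where
  "hsub x y = (\<lambda>m. x m - y m)"

definition hscale :: "'k::field \<Rightarrow> 'k halg \<Rightarrow> 'k halg" where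
  "hscale r x = (\<lambda>m. r * x m)"

definition hbasis :: "bool \<times> bool \<times> bool \<Rightarrow> 'k::field halg" where
  "hbasis m0 = (\<lambda>m. if m = m0 then 1 else 0)"

definition hone :: "'k::field halg" where "hone = hbasis (False, False, False)"
definition hb :: "'k::field halg" where "hb = hbasis (True, False, False)"
definition hc :: "'k::field halg" where "hc = hbasis (False, True, False)"
definition hz :: "'k::field halg" where "hz = hbasis (False, False, True)"

definition H_ring :: "'k::field halg ring" where
  "H_ring = \<lparr>carrier = UNIV, monoid.mult = hmul, one = hone,
             zero = (\<lambda>m. 0), add = hadd\<rparr>"

definition he :: "nat \<Rightarrow> 'k::field halg" where
  "he i = hscale (1/4)
     (if i = 0 then hmul (hadd hone hb) (hadd hone hc)
      else if i = 1 then hmul (hadd hone hb) (hsub hone hc)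
      else if i = 2 then hmul (hsub hone hb) (hadd hone hc)
      else hmul (hsub hone hb) (hsub hone hc))"

definition tau :: "nat \<Rightarrow> nat" where
  "tau i = 3 - i"

end

theory Submission
  imports Defs
begin

lemma UNIV8: "(UNIV :: (bool \<times> bool \<times> bool) set) =
  {(False,False,False),(False,False,True),(False,True,False),(False,True,True),
   (True,False,False),(True,False,True),(True,True,False),(True,True,True)}"
  by (auto simp: UNIV_bool)

lemma sum8: "(\<Sum>m\<in>(UNIV :: (bool \<times> bool \<times> bool) set). f m) =
  f (False,False,False) + f (False,False,True) + f (False,True,False) + f (False,True,True) +
  f (True,False,False) + f (True,False,True) + f (True,True,False) + f (True,True,True)"
  by (simp add: UNIV8 add.assoc)

lemma all8: "(\<forall>m :: bool \<times> bool \<times> bool. P m) \<longleftrightarrow>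
  P (False,False,False) \<and> P (False,False,True) \<and> P (False,True,False) \<and> P (False,True,True) \<and>
  P (True,False,False) \<and> P (True,False,True) \<and> P (True,True,False) \<and> P (True,True,True)"
  unfolding split_paired_All all_bool_eq by blast

lemma hmul_ev:
  fixes x y :: "'k::field halg"
  shows
  "hmul x y (False,False,False) = x (False,False,False) * y (False,False,False) + x (False,True,False) * y (False,True,False) + x (True,False,False) * y (True,False,False) + x (True,True,False) * y (True,True,False)"
  and
  "hmul x y (False,False,True) = x (False,False,False) * y (False,False,True) + x (False,False,True) * y (False,False,False) + x (False,True,False) * y (False,True,True) - x (False,True,True) * y (False,True,False) + x (True,False,False) * y (True,False,True) - x (True,False,True) * y (True,False,False) + x (True,True,False) * y (True,True,True) + x (True,True,True) * y (True,True,False)"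
  and
  "hmul x y (False,True,False) = x (False,False,False) * y (False,True,False) + x (False,True,False) * y (False,False,False) + x (True,False,False) * y (True,True,False) + x (True,True,False) * y (True,False,False)"
  and
  "hmul x y (False,True,True) = x (False,False,False) * y (False,True,True) - x (False,False,True) * y (False,True,False) + x (False,True,False) * y (False,False,True) + x (False,True,True) * y (False,False,False) + x (True,False,False) * y (True,True,True) + x (True,False,True) * y (True,True,False) + x (True,True,False) * y (True,False,True) - x (True,True,True) * y (True,False,False)"
  and
  "hmul x y (True,False,False) = x (False,False,False) * y (True,False,False) + x (False,True,False) * y (True,True,False) + x (True,False,False) * y (False,False,False) + x (True,True,False) * y (False,True,False)"
  and
  "hmul x y (True,False,True) = x (False,False,False) * y (True,False,True) - x (False,False,True) * y (True,False,False) + x (False,True,False) * y (True,True,True) + x (False,True,True) * y (True,True,False) + x (True,False,False) * y (False,False,True) + x (True,False,True) * y (False,False,False) + x (True,True,False) * y (False,True,True) - x (True,True,True) * y (False,True,False)"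
  and
  "hmul x y (True,True,False) = x (False,False,False) * y (True,True,False) + x (False,True,False) * y (True,False,False) + x (True,False,False) * y (False,True,False) + x (True,True,False) * y (False,False,False)"
  and
  "hmul x y (True,True,True) = x (False,False,False) * y (True,True,True) + x (False,False,True) * y (True,True,False) + x (False,True,False) * y (True,False,True) - x (False,True,True) * y (True,False,False) + x (True,False,False) * y (False,True,True) - x (True,False,True) * y (False,True,False) + x (True,True,False) * y (False,False,True) + x (True,True,True) * y (False,False,False)"
  unfolding hmul_def sum8 by (simp_all add: mmul_def)


lemma feq8: "(f = (g :: 'k halg)) \<longleftrightarrow>
  f (False,False,False) = g (False,False,False) \<and> f (False,False,True) = g (False,False,True) \<and>
  f (False,True,False) = g (False,True,False) \<and> f (False,True,True) = g (False,True,True) \<and>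
  f (True,False,False) = g (True,False,False) \<and> f (True,False,True) = g (True,False,True) \<and>
  f (True,True,False) = g (True,True,False) \<and> f (True,True,True) = g (True,True,True)"
  unfolding fun_eq_iff all8 by blast

lemma hmul_assoc: "hmul (hmul x y) w = hmul x (hmul y (w :: 'k::field halg))"
  unfolding feq8 hmul_ev by (simp add: algebra_simps)


lemmas hdefs = hadd_def hsub_def hscale_def hone_def hb_def hc_def hz_def hbasis_def

lemma H_ring_ring: "ring (H_ring :: 'k::field halg ring)"
proof (rule ringI)
  show "abelian_group (H_ring :: 'k::field halg ring)"
  proof (rule abelian_groupI)
    fix x :: "'k halg"
    show "\<exists>y\<in>carrier H_ring. y \<oplus>\<^bsub>H_ring\<^esub> x = \<zero>\<^bsub>H_ring\<^esub>"
      by (rule bexI[of _ "\<lambda>m. - x m"]) (simp_all add: H_ring_def hadd_def)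
  qed (simp_all add: H_ring_def hadd_def fun_eq_iff algebra_simps)
  show "monoid (H_ring :: 'k::field halg ring)"
    by (rule monoidI) (simp_all add: H_ring_def hmul_assoc feq8 hmul_ev hdefs)
qed (simp_all add: H_ring_def feq8 hmul_ev hdefs algebra_simps)

lemma H_neg: "inv\<^bsub>add_monoid (H_ring :: 'k::field halg ring)\<^esub> x = (\<lambda>m. - x m)"
proof -
  interpret ring "H_ring :: 'k::field halg ring" by (rule H_ring_ring)
  have "\<ominus>\<^bsub>H_ring\<^esub> x = (\<lambda>m. - x m)"
    by (rule minus_equality) (simp_all add: H_ring_def hadd_def fun_eq_iff)
  then show ?thesis by (simp add: a_inv_def)
qed

lemma idealI_H:
  assumes "(\<lambda>m. 0) \<in> (I :: 'k::field halg set)"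
    and "\<And>x y. x \<in> I \<Longrightarrow> y \<in> I \<Longrightarrow> hadd x y \<in> I"
    and "\<And>x. x \<in> I \<Longrightarrow> (\<lambda>m. - x m) \<in> I"
    and "\<And>a x. x \<in> I \<Longrightarrow> hmul a x \<in> I"
    and "\<And>a x. x \<in> I \<Longrightarrow> hmul x a \<in> I"
  shows "ideal I H_ring"
proof (rule idealI[OF H_ring_ring])
  show "subgroup I (add_monoid H_ring)"
  proof (rule subgroup.intro)
    fix x assume "x \<in> I"
    then show "inv\<^bsub>add_monoid H_ring\<^esub> x \<in> I" unfolding H_neg using assms(3) by simp
  qed (use assms in \<open>simp_all add: H_ring_def\<close>)
qed (use assms in \<open>simp_all add: H_ring_def\<close>)

definition I03 :: "'k::field halg set" where
  "I03 = {x. x (True,True,False) = x (False,False,False) \<and> x (False,True,False) = x (True,False,False)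
     \<and> x (True,True,True) = x (False,False,True) \<and> x (False,True,True) = x (True,False,True)}"
definition I12 :: "'k::field halg set" where
  "I12 = {x. x (True,True,False) = - x (False,False,False) \<and> x (False,True,False) = - x (True,False,False)
     \<and> x (True,True,True) = - x (False,False,True) \<and> x (False,True,True) = - x (True,False,True)}"
definition K0 :: "'k::field halg set" where
  "K0 = {x. x (True,True,False) = - x (False,False,False) \<and> x (False,True,False) = - x (True,False,False)
     \<and> x (True,True,True) = - x (False,False,True) - x (True,False,True) - x (False,True,True)}"
definition K3 :: "'k::field halg set" where
  "K3 = {x. x (True,True,False) = - x (False,False,False) \<and> x (False,True,False) = - x (True,False,False)
     \<and> x (True,True,True) = - x (False,False,True) + x (True,False,True) + x (False,True,True)}"
definition K1 :: "'k::field halg set" where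
  "K1 = {x. x (True,True,False) = x (False,False,False) \<and> x (False,True,False) = x (True,False,False)
     \<and> x (True,True,True) = x (False,False,True) + x (True,False,True) - x (False,True,True)}"
definition K2 :: "'k::field halg set" where
  "K2 = {x. x (True,True,False) = x (False,False,False) \<and> x (False,True,False) = x (True,False,False)
     \<and> x (True,True,True) = x (False,False,True) - x (True,False,True) + x (False,True,True)}"

lemma ideal_I03: "ideal (I03 :: 'k::field halg set) H_ring"
  apply (rule idealI_H)
  apply (unfold I03_def mem_Collect_eq hmul_ev hadd_def)
  apply ((elim conjE)?; simp (no_asm_simp) add: algebra_simps)+
  done
lemma ideal_I12: "ideal (I12 :: 'k::field halg set) H_ring"
  apply (rule idealI_H)
  apply (unfold I12_def mem_Collect_eq hmul_ev hadd_def)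
  apply ((elim conjE)?; simp (no_asm_simp) add: algebra_simps)+
  done
lemma ideal_K0: "ideal (K0 :: 'k::field halg set) H_ring"
  apply (rule idealI_H)
  apply (unfold K0_def mem_Collect_eq hmul_ev hadd_def)
  apply ((elim conjE)?; simp (no_asm_simp) add: algebra_simps)+
  done
lemma ideal_K1: "ideal (K1 :: 'k::field halg set) H_ring"
  apply (rule idealI_H)
  apply (unfold K1_def mem_Collect_eq hmul_ev hadd_def)
  apply ((elim conjE)?; simp (no_asm_simp) add: algebra_simps)+
  done
lemma ideal_K2: "ideal (K2 :: 'k::field halg set) H_ring"
  apply (rule idealI_H)
  apply (unfold K2_def mem_Collect_eq hmul_ev hadd_def)
  apply ((elim conjE)?; simp (no_asm_simp) add: algebra_simps)+
  done
lemma ideal_K3: "ideal (K3 :: 'k::field halg set) H_ring"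
  apply (rule idealI_H)
  apply (unfold K3_def mem_Collect_eq hmul_ev hadd_def)
  apply ((elim conjE)?; simp (no_asm_simp) add: algebra_simps)+
  done


lemma dist4:
  fixes g1 g2 g3 g4 :: "'k::field halg"
  assumes I0: "ideal I0 H_ring" and Ik: "ideal Ik H_ring" and It: "ideal It H_ring"
    and "g1 \<in> I0" "g3 \<in> Ik" "g4 \<in> It"
    and "g2 \<notin> I0" "g2 \<notin> Ik" "g2 \<notin> It" "g3 \<notin> I0" "g3 \<notin> It" "g4 \<notin> I0"
  shows "distinct [genideal H_ring {g1}, genideal H_ring {g2}, genideal H_ring {g3}, genideal H_ring {g4}]"
proof -
  interpret ring "H_ring :: 'k halg ring" by (rule H_ring_ring)
  have s: "g \<in> genideal H_ring {g}" for g :: "'k halg"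
    using genideal_self[of "{g}"] by (simp add: H_ring_def)
  have m1: "genideal H_ring {g1} \<subseteq> I0" by (rule genideal_minimal[OF I0]) (use assms in auto)
  have m3: "genideal H_ring {g3} \<subseteq> Ik" by (rule genideal_minimal[OF Ik]) (use assms in auto)
  have m4: "genideal H_ring {g4} \<subseteq> It" by (rule genideal_minimal[OF It]) (use assms in auto)
  show ?thesis using s[of g2] s[of g3] s[of g4] m1 m3 m4 assms(7-) by auto
qed

theorem lemma5p7:
  fixes i k :: nat
  assumes alg_closed: "\<forall>p :: 'k::field_char_0 poly. degree p \<ge> 1 \<longrightarrow> (\<exists>x. poly p x = 0)"
    and i: "i \<in> {0, 1, 2, 3}"
    and k: "k \<in> {0, 1, 2, 3} - {i, tau i}"
  shows "distinct
    [genideal (H_ring :: 'k halg ring) {hadd (he i) (he (tau i))},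
     genideal (H_ring :: 'k halg ring) {hadd hz (hadd (he i) (he (tau i)))},
     genideal (H_ring :: 'k halg ring) {hadd (hmul hz (he k)) (hadd (he i) (he (tau i)))},
     genideal (H_ring :: 'k halg ring) {hadd (hmul hz (he (tau k))) (hadd (he i) (he (tau i)))}]"
proof -
  have cases: "(i = 0 \<or> i = 3) \<and> (k = 1 \<or> k = 2) \<or> (i = 1 \<or> i = 2) \<and> (k = 0 \<or> k = 3)"
    using i k by (auto simp: tau_def)
  note ev = he_def hmul_ev hdefs tau_def
  show ?thesis
    using cases
  proof (elim disjE conjE)
    assume "i = 0" "k = 1" then show ?thesis
      by (intro dist4[OF ideal_I03 ideal_K1 ideal_K2]) (simp_all add: I03_def K1_def K2_def ev)
  next
    assume "i = 0" "k = 2" then show ?thesis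
      by (intro dist4[OF ideal_I03 ideal_K2 ideal_K1]) (simp_all add: I03_def K1_def K2_def ev)
  next
    assume "i = 3" "k = 1" then show ?thesis
      by (intro dist4[OF ideal_I03 ideal_K1 ideal_K2]) (simp_all add: I03_def K1_def K2_def ev)
  next
    assume "i = 3" "k = 2" then show ?thesis
      by (intro dist4[OF ideal_I03 ideal_K2 ideal_K1]) (simp_all add: I03_def K1_def K2_def ev)
  next
    assume "i = 1" "k = 0" then show ?thesis
      by (intro dist4[OF ideal_I12 ideal_K0 ideal_K3]) (simp_all add: I12_def K0_def K3_def ev)
  next
    assume "i = 1" "k = 3" then show ?thesis
      by (intro dist4[OF ideal_I12 ideal_K3 ideal_K0]) (simp_all add: I12_def K0_def K3_def ev)
  next
    assume "i = 2" "k = 0" then show ?thesis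
      by (intro dist4[OF ideal_I12 ideal_K0 ideal_K3]) (simp_all add: I12_def K0_def K3_def ev)
  next
    assume "i = 2" "k = 3" then show ?thesis
      by (intro dist4[OF ideal_I12 ideal_K3 ideal_K0]) (simp_all add: I12_def K0_def K3_def ev)
  qed
qed

end
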